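(* Let $q_1=(1,0,0)$, $q_2=(-1,0,0)$, $q_3=(0,1,0)$, $q_4=(0,-1,0)$, $q_5=(0,0,1)$, $q_6=(0,0,-1)$ be the vertices of a regular octahedron in $\mathbb{R}^3$, let $t\in(0,1)$ and let $q_{j+6}=tq_j$ for $j=1,\dots,6$. Suppose that positive masses $m_1,\dots,m_{12}$ placed at $q_1,\dots,q_{12}$ form a central configuration. Then $m_1=\dots=m_6$ and $m_7=\dots=m_{12}$.
   Context: A configuration $q=(q_1,\dots,q_N)$ of distinct points in $\mathbb{R}^3$ with masses $m_1,\dots,m_N$ is a central configuration if there exists $c\in\mathbb{R}$ such that $\sum_{j\neq i} m_j\left(\frac{1}{|q_j-q_i|^3}-c\right)(q_j-q_i)=0$ for all $i=1,\dots,N$. *)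

theory Defs
  imports "HOL-Analysis.Analysis"
begin

definition central_configuration ::
  "nat \<Rightarrow> (nat \<Rightarrow> real) \<Rightarrow> (nat \<Rightarrow> real^3) \<Rightarrow> bool" where
  "central_configuration N m q \<longleftrightarrow>
     (\<forall>i\<in>{1..N}. \<forall>j\<in>{1..N}. i \<noteq> j \<longrightarrow> q i \<noteq> q j) \<and>
     (\<exists>c::real. \<forall>i\<in>{1..N}.
        (\<Sum>j\<in>{1..N}-{i}. (m j * (1 / norm (q j - q i) ^ 3 - c)) *\<^sub>R (q j - q i)) = 0)"

definition octa :: "nat \<Rightarrow> real^3" where
  "octa j = (if j = 1 then vector [1, 0, 0] else if j = 2 then vector [-1, 0, 0]
     else if j = 3 then vector [0, 1, 0] else if j = 4 then vector [0, -1, 0]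
     else if j = 5 then vector [0, 0, 1] else vector [0, 0, -1])"

definition nested_octa :: "real \<Rightarrow> nat \<Rightarrow> real^3" where
  "nested_octa t j = (if j \<le> 6 then octa j else t *\<^sub>R octa (j - 6))"

end

theory Submission
  imports Defs
begin

lemma norm3: "norm (x::real^3) = sqrt ((x$1)^2 + (x$2)^2 + (x$3)^2)"
  by (simp add: norm_vec_def L2_set_def sum_3)

lemma comp: "(\<Sum>j\<in>S. (f j) *\<^sub>R (v j :: real^3)) $ k = (\<Sum>j\<in>S. f j * (v j $ k))"
  by simp

lemma set12: "{1..12::nat} = {1,2,3,4,5,6,7,8,9,10,11,12}"
  by (rule set_eqI, simp only: atLeastAtMost_iff insert_iff empty_iff, presburger)

lemma sum12: "sum f {1..12::nat} = f 1 + f 2 + f 3 + f 4 + f 5 + f 6 + f 7 + f 8 + f 9 + f 10 + f 11 + f (12::nat)"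
  unfolding set12 by (simp add: add.assoc)

lemma scal: assumes "(\<Sum>j\<in>{1..12}-{i::nat}. (m j * (1 / norm (nested_octa t j - nested_octa t i) ^ 3 - c)) *\<^sub>R (nested_octa t j - nested_octa t i)) = 0"
  shows "(\<Sum>j\<in>{1..12}. m j * (1 / norm (nested_octa t j - nested_octa t i) ^ 3 - c) * ((nested_octa t j - nested_octa t i) $ k)) = (0::real)"
proof -
  have h0: "(\<Sum>j\<in>{1..12}-{i::nat}. m j * (1 / norm (nested_octa t j - nested_octa t i) ^ 3 - c) * ((nested_octa t j - nested_octa t i) $ k)) = (0::real)"
    using arg_cong[OF assms, of "\<lambda>v. v $ k"] by (simp only: comp) simp
  then show ?thesis
  proof (cases "i \<in> {1..12}")
    case True
    then show ?thesis using h0 by (simp add: sum_diff1)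
  next
    case False
    then show ?thesis using h0 by simp
  qed
qed

lemma pair_lemma:
  fixes x y Ks Kw Kts K2t v c t :: real
  assumes e1: "x*(Ks-c) + t*y*(Kw-c) = 0" and e2: "x*(Kw-c) + t*y*(Kts-c) = 0"
    and e3: "x*(v - 2*c) + 2*t*(K2t-c)*y = 0"
    and d: "(Ks-Kw)*(2*t*K2t - 2*t*Kw) - t*(Kw-Kts)*(v - 2*Ks) \<noteq> 0"
  shows "x = 0 \<and> y = 0"
proof -
  have r1: "(Ks-Kw)*x + t*(Kw-Kts)*y = 0" using e1 e2 by (simp add: algebra_simps; linarith)
  have r3: "(v-2*Ks)*x + (2*t*K2t - 2*t*Kw)*y = 0" using e1 e3 by (simp add: algebra_simps; linarith)
  have "((Ks-Kw)*(2*t*K2t - 2*t*Kw) - t*(Kw-Kts)*(v - 2*Ks)) * x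
      = (2*t*K2t - 2*t*Kw) * ((Ks-Kw)*x + t*(Kw-Kts)*y) - t*(Kw-Kts) * ((v-2*Ks)*x + (2*t*K2t - 2*t*Kw)*y)"
    by (simp add: algebra_simps)
  also have "\<dots> = 0" using r1 r3 by simp
  finally have x: "x = 0" using d by simp
  have "((Ks-Kw)*(2*t*K2t - 2*t*Kw) - t*(Kw-Kts)*(v - 2*Ks)) * y
      = (Ks-Kw) * ((v-2*Ks)*x + (2*t*K2t - 2*t*Kw)*y) - (v-2*Ks) * ((Ks-Kw)*x + t*(Kw-Kts)*y)"
    by (simp add: algebra_simps)
  also have "\<dots> = 0" using r1 r3 by simp
  finally have "y = 0" using d by simp
  with x show ?thesis by simp
qed

lemma two_lemma:
  fixes x y al be ga ep :: real
  assumes "al*x + be*y = 0" "ga*x + ep*y = 0" "al > 0" "be < 0" "ga > 0" "ep > 0"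
  shows "x = 0 \<and> y = 0"
proof -
  have "(al*ep - be*ga) * x = ep*(al*x + be*y) - be*(ga*x + ep*y)" by (simp add: algebra_simps)
  also have "\<dots> = 0" using assms by simp
  finally have "(al*ep - be*ga) * x = 0" .
  moreover have "al*ep - be*ga > 0" using assms
    by (smt (verit) mult_pos_pos mult_neg_pos)
  ultimately have x: "x = 0" by simp
  then have "ep * y = 0" using assms by simp
  then have "y = 0" using assms by simp
  with x show ?thesis by simp
qed

lemma det_pos:
  fixes t :: real assumes t0: "0<t" and t1: "t<1"
  shows "(1/sqrt 2^3 - 1/sqrt(1+t^2)^3)*(2*t*(1/(2*t)^3) - 2*t*(1/sqrt(1+t^2)^3))
     - t*(1/sqrt(1+t^2)^3 - 1/(sqrt 2*t)^3)*(((1-t)*(1/(1-t)^3) + (1+t)*(1/(1+t)^3)) - 2*(1/sqrt 2^3)) > 0"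
    (is "?det > 0")
proof -
  define s where "s = sqrt 2"
  define w where "w = sqrt (1+t^2)"
  have s0: "s > 0" and s2: "s^2 = 2" unfolding s_def by auto
  have w0: "w > 0" and w2: "w^2 = 1+t^2" unfolding w_def by (auto simp: add_pos_nonneg)
  have w1: "w \<ge> 1" unfolding w_def by simp
  define Ks where "Ks = 1/s^3"
  define Kw where "Kw = 1/w^3"
  define V where "V = (1-t)*(1/(1-t)^3) + (1+t)*(1/(1+t)^3)"
  have Kts: "1/(s*t)^3 = Ks/t^3" unfolding Ks_def by (simp add: power_mult_distrib)
  have K2t: "1/(2*t)^3 = 1/(8*t^3)" by (simp add: power_mult_distrib)
  have s6: "s^6 = 8" proof - have "s^6 = (s^2)^3" by (simp add: power_mult[symmetric]) then show ?thesis using s2 by simp qed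
  have Ks2: "Ks^2 = 1/8" unfolding Ks_def using s6 by (simp add: power_mult[symmetric] power_one_over)
  have det_eq: "?det = (Ks-Kw)*(2*t*(1/(8*t^3)) - 2*t*Kw) - t*(Kw - Ks/t^3)*(V - 2*Ks)"
    unfolding Ks_def Kw_def V_def s_def[symmetric] w_def[symmetric] K2t
    using Kts unfolding Ks_def by simp
  have iden: "t^2 * ?det = (Ks-Kw)/4 + 2*t^3*Kw^2 + (Ks - t^3*Kw)*V - 2*Ks^2"
    unfolding det_eq using t0 by (simp add: field_simps power2_eq_square power3_eq_cube)
  define p where "p = 1/s"
  define q where "q = t/w"
  have p0: "p > 0" and q0: "q > 0" unfolding p_def q_def using s0 w0 t0 by auto
  have Ksp: "Ks = p^3" unfolding Ks_def p_def by (simp add: power_one_over)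
  have tKw: "t^3*Kw = q^3" unfolding Kw_def q_def by (simp add: power_divide)
  have tl1: "t^2 < 1" using t0 t1 by (simp add: abs_square_less_1)
  have "(t * s)^2 = 2*t^2" using s2 by (simp add: power_mult_distrib)
  then have "(t * s)^2 < w^2" using w2 tl1 by simp
  then have ts: "t * s < w" using w0 by (simp add: power_less_imp_less_base)
  have qp: "q < p" unfolding p_def q_def using ts s0 w0 by (simp add: field_simps)
  have p2: "p^2 = 1/2" unfolding p_def using s2 by (simp add: power_one_over)
  have q2: "q^2 = t^2/(1+t^2)" unfolding q_def using w2 by (simp add: power_divide)
  have pq2: "p^2 - q^2 = (1-t^2)/(2*(1+t^2))" unfolding p2 q2
  proof -
    have "1 + t^2 \<noteq> 0" by (smt (verit) zero_le_power2)
    then show "1 / 2 - t\<^sup>2 / (1 + t\<^sup>2) = (1 - t\<^sup>2) / (2 * (1 + t\<^sup>2))" by (simp add: field_simps)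
  qed
  have t2: "1 - t^2 > 0" using t0 t1 by (simp add: power2_eq_square) (smt (verit) mult_strict_left_mono mult_less_cancel_right1)
  have v_eq: "V = 2*(1+t^2)/(1-t^2)^2"
  proof -
    have a: "1 - t \<noteq> 0" "1 + t \<noteq> 0" using t0 t1 by auto
    have b: "1 - t^2 \<noteq> 0" using t2 by simp
    have a1: "(1-t)*(1/(1-t)^3) = 1/(1-t)^2" using a by (simp add: power3_eq_cube power2_eq_square)
    have a2: "(1+t)*(1/(1+t)^3) = 1/(1+t)^2" using a by (simp add: power3_eq_cube power2_eq_square)
    have "1/(1-t)^2 + 1/(1+t)^2 = 2*(1+t^2)/(1-t^2)^2"
      using a b by (simp add: field_simps) algebra
    then show ?thesis unfolding V_def a1 a2 .
  qed
  have cube: "p^3 - q^3 = (p^2-q^2)*(p^2+p*q+q^2)/(p+q)"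
    using p0 q0 by (simp add: field_simps power2_eq_square power3_eq_cube)
  have key: "(Ks - t^3*Kw)*V = (p^2+p*q+q^2)/((p+q)*(1-t^2))"
  proof -
    have gen: "(A/(2*B) * N/P) * (2*B/A^2) = N/(P*A)" if "A > 0" "B > 0" "P > 0" for A B N P :: real
      using that by (simp add: field_simps power2_eq_square)
    have B: "1 + t^2 > 0" by (smt (verit) zero_le_power2)
    have "(Ks - t^3*Kw)*V = ((1-t^2)/(2*(1+t^2)) * (p^2+p*q+q^2)/(p+q)) * (2*(1+t^2)/(1-t^2)^2)"
      unfolding Ksp tKw cube pq2 v_eq by simp
    also have "\<dots> = (p^2+p*q+q^2)/((p+q)*(1-t^2))" by (rule gen[OF t2 B]) (use p0 q0 in simp)
    finally show ?thesis .
  qed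
  have N0: "p^2+p*q+q^2 \<ge> 0" using p0 q0 by (simp add: add_nonneg_nonneg)
  have ge1: "(p^2+p*q+q^2)/((p+q)*(1-t^2)) \<ge> (p^2+p*q+q^2)/(p+q)"
    apply (rule divide_left_mono[OF _ N0])
    using p0 q0 t0 t2 by (auto simp: mult_pos_pos)
  have "4*(p^2+p*q+q^2) \<ge> 3*(p+q)^2"
  proof -
    have "0 \<le> (p-q)^2" by simp
    then show ?thesis by (simp add: algebra_simps power2_eq_square)
  qed
  then have ge2: "(p^2+p*q+q^2)/(p+q) \<ge> 3/4*(p+q)" using p0 q0
    by (simp add: pos_le_divide_eq power2_eq_square algebra_simps)
  have "s \<le> 10/7"
  proof -
    have "sqrt 2 \<le> sqrt ((10/7)^2)" by (rule real_sqrt_le_mono) (simp add: power2_eq_square)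
    then show ?thesis unfolding s_def by simp
  qed
  then have p7: "p \<ge> 7/10" unfolding p_def using s0 by (simp add: field_simps)
  have "p^3 \<ge> (7/10)^3" by (rule power_mono[OF p7]) simp
  then have Ksl: "Ks \<ge> 343/1000" unfolding Ksp by (simp add: power_divide)
  have "w^3 \<ge> 1" using w1 by (simp add: one_le_power)
  then have Kw1: "Kw \<le> 1" and Kw0: "Kw \<ge> 0" unfolding Kw_def using w0 by auto
  have "3/4 * p \<le> 3/4*(p+q)" using q0 by simp
  also have "\<dots> \<le> (p^2+p*q+q^2)/(p+q)" by (rule ge2)
  also have "\<dots> \<le> (p^2+p*q+q^2)/((p+q)*(1-t^2))" by (rule ge1)
  also have "\<dots> = (Ks - t^3*Kw)*V" by (rule key[symmetric])
  finally have "(Ks - t^3*Kw)*V \<ge> 3/4 * p" .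
  then have "(Ks - t^3*Kw)*V \<ge> 21/40" using p7 by linarith
  moreover have "2*t^3*Kw^2 \<ge> 0" using t0 by simp
  moreover have "\<And>X Y. 21/40 \<le> X \<Longrightarrow> 0 \<le> Y \<Longrightarrow> 0 < (Ks-Kw)/4 + Y + X - 2*(1/8)"
  proof -
    fix X Y :: real assume h: "21/40 \<le> X" "0 \<le> Y"
    show "0 < (Ks-Kw)/4 + Y + X - 2*(1/8)" using Ksl Kw1 h diff_divide_distrib[of Ks Kw 4] by linarith
  qed
  ultimately have "t^2 * ?det > 0" unfolding iden Ks2 by blast
  then show ?thesis using t0 by (simp add: zero_less_mult_iff)
qed
lemma V_eq:
  fixes t :: real assumes t0: "0<t" and t1: "t<1"
  shows "(1-t)*(1/(1-t)^3) + (1+t)*(1/(1+t)^3) = 2*(1+t^2)/(1-t^2)^2"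
proof -
  have a: "1 - t \<noteq> 0" "1 + t \<noteq> 0" using t0 t1 by auto
  have t2: "1 - t^2 > 0" using t0 t1 by (simp add: abs_square_less_1)
  have b: "1 - t^2 \<noteq> 0" using t2 by simp
  have a1: "(1-t)*(1/(1-t)^3) = 1/(1-t)^2" using a by (simp add: power3_eq_cube power2_eq_square)
  have a2: "(1+t)*(1/(1+t)^3) = 1/(1+t)^2" using a by (simp add: power3_eq_cube power2_eq_square)
  have "1/(1-t)^2 + 1/(1+t)^2 = 2*(1+t^2)/(1-t^2)^2"
    using a b by (simp add: field_simps) algebra
  then show ?thesis unfolding a1 a2 .
qed

lemma aux_pos:
  fixes t :: real assumes t0: "0<t" and t1: "t<1"
  shows "2*(1/sqrt 2^3) - 2*(1/8) > 0"
    and "2*(1/sqrt(1+t^2)^3) - ((1-t)*(1/(1-t)^3) + (1+t)*(1/(1+t)^3)) < 0"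
    and "(1-t)*(1/(1-t)^3) - (1+t)*(1/(1+t)^3) + 2*t*(1/sqrt(1+t^2)^3) > 0"
    and "1/(sqrt 2 * t)^3 - 1/(2*t)^3 > 0"
proof -
  have s2: "sqrt 2 < 2" by (rule real_less_lsqrt) auto
  have s0: "sqrt 2 > 0" by simp
  have "sqrt 2 ^ 3 < 2^3" by (rule power_strict_mono[OF s2]) auto
  then have "1/sqrt 2^3 > 1/8" using s0 by (simp add: divide_strict_left_mono)
  then show "2*(1/sqrt 2^3) - 2*(1/8) > 0" by simp
  have w1: "sqrt(1+t^2) \<ge> 1" by simp
  then have "sqrt(1+t^2)^3 \<ge> 1" by (simp add: one_le_power)
  then have Kw: "1/sqrt(1+t^2)^3 \<le> 1" using w1 by (smt (verit) divide_le_eq_1)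
  have Kw0: "1/sqrt(1+t^2)^3 > 0" using w1 by (smt (verit) zero_less_divide_1_iff zero_less_power)
  have t2: "1 - t^2 > 0" "1 - t^2 \<le> 1" using t0 t1 by (auto simp add: abs_square_less_1)
  then have "(1-t^2)^2 \<le> 1" by (simp add: power_le_one)
  moreover have "2*(1+t^2) > 0" by (smt (verit) zero_le_power2)
  ultimately have "2*(1+t^2)*(1-t^2)^2 \<le> 2*(1+t^2)" by (intro mult_left_le) auto
  moreover have pos: "(1-t^2)^2 > 0" using t2 by simp
  ultimately have "2*(1+t^2)/(1-t^2)^2 \<ge> 2*(1+t^2)" using pos_le_divide_eq[OF pos] by blast
  moreover have "2*(1+t^2) > 2" using t0 by simp
  ultimately show "2*(1/sqrt(1+t^2)^3) - ((1-t)*(1/(1-t)^3) + (1+t)*(1/(1+t)^3)) < 0"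
    unfolding V_eq[OF t0 t1] using Kw by linarith
  have a: "1 - t \<noteq> 0" "1 + t \<noteq> 0" using t0 t1 by auto
  have a1: "(1-t)*(1/(1-t)^3) = 1/(1-t)^2" using a by (simp add: power3_eq_cube power2_eq_square)
  have a2: "(1+t)*(1/(1+t)^3) = 1/(1+t)^2" using a by (simp add: power3_eq_cube power2_eq_square)
  have "(1-t)^2 < (1+t)^2" using t0 t1 by (simp add: power2_eq_square algebra_simps)
  then have "1/(1-t)^2 > 1/(1+t)^2" using t0 t1 by (simp add: divide_strict_left_mono)
  then show "(1-t)*(1/(1-t)^3) - (1+t)*(1/(1+t)^3) + 2*t*(1/sqrt(1+t^2)^3) > 0"
    unfolding a1 a2 using Kw0 t0 by (smt (verit) mult_pos_pos)
  have "sqrt 2 * t < 2 * t" using s2 t0 by simp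
  then have "(sqrt 2 * t)^3 < (2*t)^3" by (rule power_strict_mono) (use t0 in auto)
  then show "1/(sqrt 2 * t)^3 - 1/(2*t)^3 > 0" using t0 by (simp add: divide_strict_left_mono)
qed

lemma set6: "{1..6::nat} = {1,2,3,4,5,6}"
  by (rule set_eqI, simp only: atLeastAtMost_iff insert_iff empty_iff, presburger)

lemma set712: "{7..12::nat} = {7,8,9,10,11,12}"
  by (rule set_eqI, simp only: atLeastAtMost_iff insert_iff empty_iff, presburger)

theorem theorem8:
  fixes t :: real and m :: "nat \<Rightarrow> real"
  assumes "0 < t" "t < 1"
    and "\<forall>i\<in>{1..12}. m i > 0"
    and "central_configuration 12 m (nested_octa t)"
  shows "(\<forall>i\<in>{1..6}. m i = m 1) \<and> (\<forall>i\<in>{7..12}. m i = m 7)"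
proof -
  have t0: "0 < t" and t1: "t < 1" using assms(1,2) .
  obtain c where H: "\<forall>i\<in>{1..12}. (\<Sum>j\<in>{1..12}-{i}. (m j * (1 / norm (nested_octa t j - nested_octa t i) ^ 3 - c)) *\<^sub>R (nested_octa t j - nested_octa t i)) = 0"
    using assms(4) unfolding central_configuration_def by blast
  have E: "(\<Sum>j\<in>{1..12}. m j * (1 / norm (nested_octa t j - nested_octa t i) ^ 3 - c) * ((nested_octa t j - nested_octa t i) $ k)) = 0"
    if "i \<in> {1..12}" for i k
    using scal[OF H[rule_format, OF that]] .
  define s where "s = sqrt 2"
  define w where "w = sqrt (1 + t^2)"
  define Ks where "Ks = 1 / s^3"
  define Kw where "Kw = 1 / w^3"
  define Kts where "Kts = 1 / (s*t)^3"
  define K2t where "K2t = 1 / (2*t)^3"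
  define Km where "Km = 1 / (1-t)^3"
  define Kp where "Kp = 1 / (1+t)^3"
  note Kdefs = Ks_def Kw_def Kts_def K2t_def Km_def Kp_def
  have k2: "1 / (8 * t^3) = K2t" unfolding K2t_def by (simp add: power_mult_distrib)
  have r: "sqrt 2 = s" "sqrt (1 + t^2) = w" "sqrt (t^2 + 1) = w" "sqrt (2 * t^2) = s * t" "sqrt (4 * t^2) = 2 * t"
    "\<bar>t+1\<bar> = 1+t" "\<bar>1+t\<bar> = 1+t" "\<bar>t-1\<bar> = 1-t" "\<bar>1-t\<bar> = 1-t" "\<bar>-t-1\<bar> = 1+t" "\<bar>-1-t\<bar> = 1+t"
    using t0 t1 by (auto simp: s_def w_def real_sqrt_mult add.commute)
  note ss = nested_octa_def octa_def norm3 t0 t1 r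

  have dpos: "(Ks-Kw)*(2*t*K2t - 2*t*Kw) - t*(Kw-Kts)*(((1-t)*Km + (1+t)*Kp) - 2*Ks) > 0"
    unfolding Kdefs s_def w_def by (rule det_pos[OF t0 t1])
  then have d: "(Ks-Kw)*(2*t*K2t - 2*t*Kw) - t*(Kw-Kts)*(((1-t)*Km + (1+t)*Kp) - 2*Ks) \<noteq> 0" by simp

  have a1: "(m 1 - m 2)*(Ks - c) + t*(m 7 - m 8)*(Kw - c) = 0"
    using E[of 3 1] unfolding sum12 by (simp add: ss Kdefs[symmetric] k2; simp add: algebra_simps; linarith)
  have a2: "(m 1 - m 2)*(Kw - c) + t*(m 7 - m 8)*(Kts - c) = 0"
    using E[of 9 1] unfolding sum12 by (simp add: ss Kdefs[symmetric] k2; simp add: algebra_simps; linarith)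
  have a3: "(m 1 - m 2)*(((1-t)*Km + (1+t)*Kp) - 2*c) + 2*t*(K2t - c)*(m 7 - m 8) = 0"
    using E[of 7 1] E[of 8 1] unfolding sum12 by (simp add: ss Kdefs[symmetric] k2; simp add: algebra_simps; linarith)
  have b1: "(m 3 - m 4)*(Ks - c) + t*(m 9 - m 10)*(Kw - c) = 0"
    using E[of 1 2] unfolding sum12 by (simp add: ss Kdefs[symmetric] k2; simp add: algebra_simps; linarith)
  have b2: "(m 3 - m 4)*(Kw - c) + t*(m 9 - m 10)*(Kts - c) = 0"
    using E[of 7 2] unfolding sum12 by (simp add: ss Kdefs[symmetric] k2; simp add: algebra_simps; linarith)
  have b3: "(m 3 - m 4)*(((1-t)*Km + (1+t)*Kp) - 2*c) + 2*t*(K2t - c)*(m 9 - m 10) = 0"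
    using E[of 9 2] E[of 10 2] unfolding sum12 by (simp add: ss Kdefs[symmetric] k2; simp add: algebra_simps; linarith)
  have c1: "(m 5 - m 6)*(Ks - c) + t*(m 11 - m 12)*(Kw - c) = 0"
    using E[of 1 3] unfolding sum12 by (simp add: ss Kdefs[symmetric] k2; simp add: algebra_simps; linarith)
  have c2: "(m 5 - m 6)*(Kw - c) + t*(m 11 - m 12)*(Kts - c) = 0"
    using E[of 7 3] unfolding sum12 by (simp add: ss Kdefs[symmetric] k2; simp add: algebra_simps; linarith)
  have c3: "(m 5 - m 6)*(((1-t)*Km + (1+t)*Kp) - 2*c) + 2*t*(K2t - c)*(m 11 - m 12) = 0"
    using E[of 11 3] E[of 12 3] unfolding sum12 by (simp add: ss Kdefs[symmetric] k2; simp add: algebra_simps; linarith)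
  have pa: "m 1 - m 2 = 0 \<and> m 7 - m 8 = 0" by (rule pair_lemma[OF a1 a2 a3 d])
  have pb: "m 3 - m 4 = 0 \<and> m 9 - m 10 = 0" by (rule pair_lemma[OF b1 b2 b3 d])
  have pc: "m 5 - m 6 = 0 \<and> m 11 - m 12 = 0" by (rule pair_lemma[OF c1 c2 c3 d])
  have q: "m 2 = m 1" "m 8 = m 7" "m 4 = m 3" "m 10 = m 9" "m 6 = m 5" "m 12 = m 11"
    using pa pb pc by auto
  have d1: "(2*Ks - 2*(1/8))*(m 1 - m 3) + (2*Kw - ((1-t)*Km + (1+t)*Kp))*(m 7 - m 9) = 0"
    using E[of 1 1] E[of 3 2] unfolding sum12 by (simp add: ss q Kdefs[symmetric] k2; simp add: algebra_simps; linarith)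
  have d2: "((1-t)*Km - (1+t)*Kp + 2*t*Kw)*(m 1 - m 3) + (2*t*(Kts - K2t))*(m 7 - m 9) = 0"
    using E[of 7 1] E[of 9 2] unfolding sum12 by (simp add: ss q Kdefs[symmetric] k2; simp add: algebra_simps; linarith)
  have d3: "(2*Ks - 2*(1/8))*(m 1 - m 5) + (2*Kw - ((1-t)*Km + (1+t)*Kp))*(m 7 - m 11) = 0"
    using E[of 1 1] E[of 5 3] unfolding sum12 by (simp add: ss q Kdefs[symmetric] k2; simp add: algebra_simps; linarith)
  have d4: "((1-t)*Km - (1+t)*Kp + 2*t*Kw)*(m 1 - m 5) + (2*t*(Kts - K2t))*(m 7 - m 11) = 0"
    using E[of 7 1] E[of 11 3] unfolding sum12 by (simp add: ss q Kdefs[symmetric] k2; simp add: algebra_simps; linarith)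
  have al: "2*Ks - 2*(1/8) > 0" unfolding Kdefs s_def by (rule aux_pos(1)[OF t0 t1])
  have be: "2*Kw - ((1-t)*Km + (1+t)*Kp) < 0" unfolding Kdefs w_def by (rule aux_pos(2)[OF t0 t1])
  have ga: "(1-t)*Km - (1+t)*Kp + 2*t*Kw > 0" unfolding Kdefs w_def by (rule aux_pos(3)[OF t0 t1])
  have "Kts - K2t > 0" unfolding Kdefs s_def by (rule aux_pos(4)[OF t0 t1])
  then have ep: "2*t*(Kts - K2t) > 0" using t0 by simp
  have e13: "m 1 - m 3 = 0 \<and> m 7 - m 9 = 0" by (rule two_lemma[OF d1 d2 al be ga ep])
  have e15: "m 1 - m 5 = 0 \<and> m 7 - m 11 = 0" by (rule two_lemma[OF d3 d4 al be ga ep])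
  show ?thesis unfolding set6 set712 using q e13 e15 by auto
qed

end
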